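(* Let $T:\mathcal{M}_2\to\mathcal{M}_2$ be a random Pauli channel $T(\rho)=p_1\sigma_1\rho\sigma_1+p_2\sigma_2\rho\sigma_2+p_3\sigma_3\rho\sigma_3+(1-p_1-p_2-p_3)\rho$ and define $p=2\min\{p_1p_2+p_1p_3,\,p_2p_1+p_2p_3,\,p_3p_1+p_3p_2\}$. Then for every density matrix $\rho\in\mathcal{M}_2$, $$S(T(\rho))-S(\rho)\geq p(\log 2-S(\rho)).$$
   Context: $(p_1,p_2,p_3,1-p_1-p_2-p_3)$ is a probability distribution, $\sigma_i$ are the Pauli matrices, and $S(\rho)=-\text{tr}(\rho\log\rho)$. *)

theory Defs
  imports "Jordan_Normal_Form.Schur_Decomposition" "HOL-Computational_Algebra.Polynomial"
begin

definition sigma1 :: "complex mat" where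
  "sigma1 = mat_of_rows_list 2 [[0, 1], [1, 0]]"
definition sigma2 :: "complex mat" where
  "sigma2 = mat_of_rows_list 2 [[0, - \<i>], [\<i>, 0]]"
definition sigma3 :: "complex mat" where
  "sigma3 = mat_of_rows_list 2 [[1, 0], [0, -1]]"

definition mtrace :: "complex mat \<Rightarrow> complex" where
  "mtrace A = (\<Sum>i<dim_row A. A $$ (i, i))"

definition density_matrix :: "complex mat \<Rightarrow> bool" where
  "density_matrix \<rho> \<longleftrightarrow> \<rho> \<in> carrier_mat 2 2 \<and> mat_adjoint \<rho> = \<rho> \<and>
     (\<forall>v \<in> carrier_vec 2. 0 \<le> Re (conjugate v \<bullet> (\<rho> *\<^sub>v v))) \<and> mtrace \<rho> = 1"

definition pauli_channel :: "real \<Rightarrow> real \<Rightarrow> real \<Rightarrow> complex mat \<Rightarrow> complex mat" where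
  "pauli_channel p1 p2 p3 \<rho> =
     complex_of_real p1 \<cdot>\<^sub>m (sigma1 * \<rho> * sigma1) +
     complex_of_real p2 \<cdot>\<^sub>m (sigma2 * \<rho> * sigma2) +
     complex_of_real p3 \<cdot>\<^sub>m (sigma3 * \<rho> * sigma3) +
     complex_of_real (1 - p1 - p2 - p3) \<cdot>\<^sub>m \<rho>"

text \<open>Von Neumann entropy S(rho) = - tr(rho log rho) = - sum over eigenvalues (counted with
  algebraic multiplicity, i.e. as roots of the characteristic polynomial) of
  lambda * ln lambda, with the convention 0 ln 0 = 0 (ln 0 = 0 in Isabelle).
  Eigenvalues of a Hermitian matrix are real, hence Re.\<close>
definition vn_entropy :: "complex mat \<Rightarrow> real" where
  "vn_entropy \<rho> = - (\<Sum>a \<in> {a. poly (char_poly \<rho>) a = 0}.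
       real (order a (char_poly \<rho>)) * (Re a * ln (Re a)))"

end

theory Submission
  imports Defs
begin

lemma det2: assumes "(A :: 'a :: comm_ring_1 mat) \<in> carrier_mat 2 2"
  shows "det A = A$$(0,0)*A$$(1,1) - A$$(0,1)*A$$(1,0)"
proof -
  have "det A = (\<Sum>i<2. A $$ (i,0) * cofactor A i 0)"
    by (rule laplace_expansion_column[OF assms], simp)
  also have "\<dots> = A$$(0,0)*cofactor A 0 0 + A$$(1,0) * cofactor A 1 0"
    by (simp add: numeral_2_eq_2)
  also have "cofactor A 0 0 = A$$(1,1)"
    unfolding cofactor_def using assms
    by (subst det_single, auto simp: mat_delete_def)
  also have "cofactor A 1 0 = - A$$(0,1)"
    unfolding cofactor_def using assms
    by (subst det_single, auto simp: mat_delete_def)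
  finally show ?thesis by (simp add: algebra_simps)
qed

lemma char_poly2: assumes "(A :: 'a :: comm_ring_1 mat) \<in> carrier_mat 2 2"
  shows "char_poly A = [:A$$(0,0)*A$$(1,1) - A$$(0,1)*A$$(1,0), -(A$$(0,0)+A$$(1,1)), 1:]"
  unfolding char_poly_def
  apply (subst det2)
  using assms apply simp
  using assms apply (simp add: char_poly_matrix_def)
  done

lemma entropy_roots: assumes "char_poly M = [:-a,1:]*[:-b,1:]"
  shows "vn_entropy M = - (Re a * ln (Re a) + Re b * ln (Re b))"
proof -
  have "poly (char_poly M) x = (x-a)*(x-b)" for x unfolding assms poly_mult by simp
  then have Z: "{x. poly (char_poly M) x = 0} = {a,b}" by auto
  show ?thesis
  proof (cases "a = b")
    case True
    have "char_poly M = [:-a,1:]^2" using assms True by (simp add: power2_eq_square)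
    then have "order a (char_poly M) = 2" using order_power_n_n by metis
    then show ?thesis unfolding vn_entropy_def Z using True by simp
  next
    case False
    have nz: "[:-a,1:]*[:-b,1:] \<noteq> (0::complex poly)" by simp
    have o1: "order a [:-a,1:] = 1" using order_power_n_n[of a 1] by simp
    have o2: "order b [:-b,1:] = 1" using order_power_n_n[of b 1] by simp
    have o3: "order a [:-b,1:] = 0" using False by (intro order_0I) simp
    have o4: "order b [:-a,1:] = 0" using False by (intro order_0I) simp
    have "order a (char_poly M) = 1" "order b (char_poly M) = 1"
      unfolding assms order_mult[OF nz] using o1 o2 o3 o4 by auto
    then show ?thesis unfolding vn_entropy_def Z using False by simp
  qed
qed

lemma two_set: "{0..<2::nat} = {0,1}" by auto
lemma mult2: assumes "A \<in> carrier_mat 2 2" "B \<in> carrier_mat 2 2" "i < 2" "j < 2"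
  shows "(A*B)$$(i,j) = A$$(i,0)*B$$(0,j) + A$$(i,1)*B$$(1,j)"
  using assms by (simp add: scalar_prod_def two_set row_def col_def)

lemma s1: "sigma1 \<in> carrier_mat 2 2" "sigma1 $$ (0,0) = 0" "sigma1 $$ (0,1) = 1" "sigma1 $$ (1,0) = 1" "sigma1 $$ (1,1) = 0"
proof -
  show "sigma1 \<in> carrier_mat 2 2" unfolding sigma1_def mat_of_rows_list_def carrier_mat_def by simp
qed (simp_all add: sigma1_def mat_of_rows_list_def)
lemma s1S: "sigma1 $$ (0,Suc 0) = 1" "sigma1 $$ (Suc 0,0) = 1" "sigma1 $$ (Suc 0,Suc 0) = 0" using s1 by simp_all
lemma d1[simp]: "dim_row sigma1 = 2" "dim_col sigma1 = 2" using s1(1) by auto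
lemma s2: "sigma2 \<in> carrier_mat 2 2" "sigma2 $$ (0,0) = 0" "sigma2 $$ (0,1) = -\<i>" "sigma2 $$ (1,0) = \<i>" "sigma2 $$ (1,1) = 0"
proof -
  show "sigma2 \<in> carrier_mat 2 2" unfolding sigma2_def mat_of_rows_list_def carrier_mat_def by simp
qed (simp_all add: sigma2_def mat_of_rows_list_def)
lemma s2S: "sigma2 $$ (0,Suc 0) = -\<i>" "sigma2 $$ (Suc 0,0) = \<i>" "sigma2 $$ (Suc 0,Suc 0) = 0" using s2 by simp_all
lemma d2[simp]: "dim_row sigma2 = 2" "dim_col sigma2 = 2" using s2(1) by auto
lemma s3: "sigma3 \<in> carrier_mat 2 2" "sigma3 $$ (0,0) = 1" "sigma3 $$ (0,1) = 0" "sigma3 $$ (1,0) = 0" "sigma3 $$ (1,1) = -1"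
proof -
  show "sigma3 \<in> carrier_mat 2 2" unfolding sigma3_def mat_of_rows_list_def carrier_mat_def by simp
qed (simp_all add: sigma3_def mat_of_rows_list_def)
lemma s3S: "sigma3 $$ (0,Suc 0) = 0" "sigma3 $$ (Suc 0,0) = 0" "sigma3 $$ (Suc 0,Suc 0) = -1" using s3 by simp_all
lemma d3[simp]: "dim_row sigma3 = 2" "dim_col sigma3 = 2" using s3(1) by auto

lemma qf2: assumes "A \<in> carrier_mat 2 2"
  shows "conjugate (vec 2 f) \<bullet> (A *\<^sub>v vec 2 f) =
    cnj (f 0) * (A$$(0,0) * f 0 + A$$(0,1) * f 1) + cnj (f 1) * (A$$(1,0) * f 0 + A$$(1,1) * f 1)"
  using assms by (simp add: scalar_prod_def two_set mult_mat_vec_def row_def)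

lemma pent: assumes "\<rho> \<in> carrier_mat 2 2" "i<2" "j<2"
  shows "pauli_channel p1 p2 p3 \<rho> $$ (i,j) = complex_of_real p1 * (sigma1*\<rho>*sigma1)$$(i,j) + p2 * (sigma2*\<rho>*sigma2)$$(i,j)
     + p3*(sigma3*\<rho>*sigma3)$$(i,j) + complex_of_real (1-p1-p2-p3) * \<rho>$$(i,j)"
  using assms unfolding pauli_channel_def by simp

lemma ii: "\<i> * x * \<i> = - (x::complex)" by (simp add: complex_eq_iff)

lemma trip: assumes C: "\<rho> \<in> carrier_mat 2 2"
  shows "(sigma1*\<rho>*sigma1)$$(0,0) = \<rho>$$(1,1)" "(sigma1*\<rho>*sigma1)$$(1,1) = \<rho>$$(0,0)"
    "(sigma1*\<rho>*sigma1)$$(0,1) = \<rho>$$(1,0)" "(sigma1*\<rho>*sigma1)$$(1,0) = \<rho>$$(0,1)"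
    "(sigma2*\<rho>*sigma2)$$(0,0) = \<rho>$$(1,1)" "(sigma2*\<rho>*sigma2)$$(1,1) = \<rho>$$(0,0)"
    "(sigma2*\<rho>*sigma2)$$(0,1) = -\<rho>$$(1,0)" "(sigma2*\<rho>*sigma2)$$(1,0) = -\<rho>$$(0,1)"
    "(sigma3*\<rho>*sigma3)$$(0,0) = \<rho>$$(0,0)" "(sigma3*\<rho>*sigma3)$$(1,1) = \<rho>$$(1,1)"
    "(sigma3*\<rho>*sigma3)$$(0,1) = -\<rho>$$(0,1)" "(sigma3*\<rho>*sigma3)$$(1,0) = -\<rho>$$(1,0)"
proof -
  have c: "sigma1 * \<rho> \<in> carrier_mat 2 2" "sigma2 * \<rho> \<in> carrier_mat 2 2"
     "sigma3 * \<rho> \<in> carrier_mat 2 2" using C s1(1) s2(1) s3(1) by auto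
  note m = mult2[OF c(1) s1(1)] mult2[OF c(2) s2(1)] mult2[OF c(3) s3(1)]
    mult2[OF s1(1) C] mult2[OF s2(1) C] mult2[OF s3(1) C]
  show "(sigma1*\<rho>*sigma1)$$(0,0) = \<rho>$$(1,1)" "(sigma1*\<rho>*sigma1)$$(1,1) = \<rho>$$(0,0)"
    "(sigma1*\<rho>*sigma1)$$(0,1) = \<rho>$$(1,0)" "(sigma1*\<rho>*sigma1)$$(1,0) = \<rho>$$(0,1)"
    "(sigma2*\<rho>*sigma2)$$(0,0) = \<rho>$$(1,1)" "(sigma2*\<rho>*sigma2)$$(1,1) = \<rho>$$(0,0)"
    "(sigma2*\<rho>*sigma2)$$(0,1) = -\<rho>$$(1,0)" "(sigma2*\<rho>*sigma2)$$(1,0) = -\<rho>$$(0,1)"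
    "(sigma3*\<rho>*sigma3)$$(0,0) = \<rho>$$(0,0)" "(sigma3*\<rho>*sigma3)$$(1,1) = \<rho>$$(1,1)"
    "(sigma3*\<rho>*sigma3)$$(0,1) = -\<rho>$$(0,1)" "(sigma3*\<rho>*sigma3)$$(1,0) = -\<rho>$$(1,0)"
    by (simp_all del: index_mult_mat add: m s1 s2 s3 s1S s2S s3S ii)
qed

lemma pc: assumes "\<rho> \<in> carrier_mat 2 2"
  shows "pauli_channel p1 p2 p3 \<rho> \<in> carrier_mat 2 2"
   "pauli_channel p1 p2 p3 \<rho> $$ (0,0) = complex_of_real (p1+p2) * \<rho>$$(1,1) + complex_of_real (1-p1-p2) * \<rho>$$(0,0)"
   "pauli_channel p1 p2 p3 \<rho> $$ (1,1) = complex_of_real (p1+p2) * \<rho>$$(0,0) + complex_of_real (1-p1-p2) * \<rho>$$(1,1)"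
   "pauli_channel p1 p2 p3 \<rho> $$ (0,1) = complex_of_real (1-p1-p2-2*p3) * \<rho>$$(0,1) + complex_of_real (p1-p2) * \<rho>$$(1,0)"
   "pauli_channel p1 p2 p3 \<rho> $$ (1,0) = complex_of_real (1-p1-p2-2*p3) * \<rho>$$(1,0) + complex_of_real (p1-p2) * \<rho>$$(0,1)"
proof -
  show "pauli_channel p1 p2 p3 \<rho> \<in> carrier_mat 2 2" using assms s1(1) s2(1) s3(1)
    unfolding pauli_channel_def by auto
  have "pauli_channel p1 p2 p3 \<rho> $$ (0,0) = p1 * (sigma1*\<rho>*sigma1)$$(0,0) + p2 * (sigma2*\<rho>*sigma2)$$(0,0)
     + p3*(sigma3*\<rho>*sigma3)$$(0,0) + complex_of_real (1-p1-p2-p3) * \<rho>$$(0,0)" by (rule pent[OF assms]) simp_all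
  then show "pauli_channel p1 p2 p3 \<rho> $$ (0,0) = complex_of_real (p1+p2) * \<rho>$$(1,1) + complex_of_real (1-p1-p2) * \<rho>$$(0,0)" unfolding trip[OF assms] by (simp add: algebra_simps)
  have "pauli_channel p1 p2 p3 \<rho> $$ (1,1) = p1 * (sigma1*\<rho>*sigma1)$$(1,1) + p2 * (sigma2*\<rho>*sigma2)$$(1,1)
     + p3*(sigma3*\<rho>*sigma3)$$(1,1) + complex_of_real (1-p1-p2-p3) * \<rho>$$(1,1)" by (rule pent[OF assms]) simp_all
  then show "pauli_channel p1 p2 p3 \<rho> $$ (1,1) = complex_of_real (p1+p2) * \<rho>$$(0,0) + complex_of_real (1-p1-p2) * \<rho>$$(1,1)" unfolding trip[OF assms] by (simp add: algebra_simps)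
  have "pauli_channel p1 p2 p3 \<rho> $$ (0,1) = p1 * (sigma1*\<rho>*sigma1)$$(0,1) + p2 * (sigma2*\<rho>*sigma2)$$(0,1)
     + p3*(sigma3*\<rho>*sigma3)$$(0,1) + complex_of_real (1-p1-p2-p3) * \<rho>$$(0,1)" by (rule pent[OF assms]) simp_all
  then show "pauli_channel p1 p2 p3 \<rho> $$ (0,1) = complex_of_real (1-p1-p2-2*p3) * \<rho>$$(0,1) + complex_of_real (p1-p2) * \<rho>$$(1,0)" unfolding trip[OF assms] by (simp add: algebra_simps)
  have "pauli_channel p1 p2 p3 \<rho> $$ (1,0) = p1 * (sigma1*\<rho>*sigma1)$$(1,0) + p2 * (sigma2*\<rho>*sigma2)$$(1,0)
     + p3*(sigma3*\<rho>*sigma3)$$(1,0) + complex_of_real (1-p1-p2-p3) * \<rho>$$(1,0)" by (rule pent[OF assms]) simp_all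
  then show "pauli_channel p1 p2 p3 \<rho> $$ (1,0) = complex_of_real (1-p1-p2-2*p3) * \<rho>$$(1,0) + complex_of_real (p1-p2) * \<rho>$$(0,1)" unfolding trip[OF assms] by (simp add: algebra_simps)
qed

lemma xln_bound: fixes y :: real assumes "0 < y" "y < 1"
  shows "-2*sqrt y \<le> y * ln y" "y * ln y \<le> 0"
proof -
  show "y * ln y \<le> 0" using assms by (simp add: mult_nonneg_nonpos)
  have sp: "0 < sqrt y" using assms by simp
  have "ln (1/sqrt y) \<le> 1/sqrt y - 1" using sp by (intro ln_le_minus_one) simp
  moreover have "ln (1/sqrt y) = - ln y / 2" using assms by (simp add: ln_div ln_sqrt)
  ultimately have "- ln y \<le> 2 / sqrt y" by simp
  then have "y * (- ln y) \<le> y * (2 / sqrt y)" using assms by (intro mult_left_mono) auto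
  also have "y * (2 / sqrt y) = 2 * sqrt y" using assms sp
    by (simp add: field_simps)
  finally show "-2*sqrt y \<le> y * ln y" by simp
qed

lemma lim1: "((\<lambda>t. (1-t)*ln(1-t)) \<longlongrightarrow> 0) (at_left (1::real))"
proof (rule tendsto_sandwich[where f="\<lambda>t. -2*sqrt(1-t)" and h="\<lambda>t. 0"])
  show "\<forall>\<^sub>F t in at_left (1::real). -2*sqrt(1-t) \<le> (1-t)*ln(1-t)"
  proof (rule eventually_at_leftI[of 0])
    fix t :: real assume "t \<in> {0<..<1}"
    then show "-2*sqrt(1-t) \<le> (1-t)*ln(1-t)" using xln_bound(1)[of "1-t"] by simp
  qed simp
  show "\<forall>\<^sub>F t in at_left (1::real). (1-t)*ln(1-t) \<le> 0"
  proof (rule eventually_at_leftI[of 0])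
    fix t :: real assume "t \<in> {0<..<1}"
    then show "(1-t)*ln(1-t) \<le> 0" using xln_bound(2)[of "1-t"] by simp
  qed simp
  have "((\<lambda>t. -2*sqrt(1-t)) \<longlongrightarrow> -2*sqrt(1-1)) (at_left (1::real))"
    by (intro tendsto_intros)
  then show "((\<lambda>t. -2*sqrt(1-t)) \<longlongrightarrow> 0) (at_left (1::real))" by simp
qed simp

definition GG :: "real \<Rightarrow> real" where
  "GG t = ((1+t)*ln(1+t) + (1-t)*ln(1-t))/2"

lemma GG_deriv: "-1 < x \<Longrightarrow> x < 1 \<Longrightarrow> (GG has_real_derivative (ln (1+x) - ln (1-x))/2) (at x)"
  unfolding GG_def
  by (rule derivative_eq_intros refl | simp)+

lemma GG_cont: "continuous_on {0..1} GG"
proof -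
  have "continuous (at x within {0..1}) GG" if "x \<in> {0..1}" for x
  proof (cases "x = 1")
    case True
    have "((\<lambda>t. ((1+t)*ln(1+t) + (1-t)*ln(1-t))/2) \<longlongrightarrow> ((1+1)*ln(1+1) + 0)/2) (at_left (1::real))"
      by (intro tendsto_intros lim1) auto
    then have "(GG \<longlongrightarrow> ln 2) (at_left 1)" unfolding GG_def by simp
    moreover have "GG 1 = ln 2" by (simp add: GG_def)
    ultimately have "(GG \<longlongrightarrow> GG 1) (at 1 within {0..1})"
      by (simp add: at_within_Icc_at_left)
    then show ?thesis using True by (simp add: continuous_within)
  next
    case False
    then have "x < 1" "-1 < x" using that by auto
    then have "isCont GG x" using GG_deriv DERIV_isCont by blast
    then show ?thesis using continuous_at_imp_continuous_at_within by blast
  qed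
  then show ?thesis using continuous_on_eq_continuous_within by blast
qed

lemma Ld: fixes y :: real assumes "-1 < y" "y < 1"
  shows "((\<lambda>z. (ln (1+z) - ln (1-z))/2) has_real_derivative 1/(1-y^2)) (at y)"
proof -
  have "((\<lambda>z. (ln (1+z) - ln (1-z))/2) has_real_derivative (1/(1+y) + 1/(1-y))/2) (at y)"
    using assms by (auto intro!: derivative_eq_intros)
  moreover have "y^2 < 1" using assms by (simp add: abs_square_less_1 abs_less_iff)
  then have "1 - y*y \<noteq> 0" by (simp add: power2_eq_square)
  moreover have "(1/(1+y) + 1/(1-y))/2 = 1/(1-y^2)"
    using assms calculation(2) by (simp add: field_simps power2_eq_square)
  ultimately show ?thesis by simp
qed

lemma Qd: fixes y :: real assumes "-1 < y" "y < 1"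
  shows "((\<lambda>z. z/(1-z^2)) has_real_derivative (1+y^2)/(1-y^2)^2) (at y)"
proof -
  have "y^2 < 1" using assms by (simp add: abs_square_less_1 abs_less_iff)
  then have ne: "1 - y^2 \<noteq> 0" by simp
  have "((\<lambda>z. z/(1-z^2)) has_real_derivative (1*(1-y^2) - y*(-(2*y)))/((1-y^2)*(1-y^2))) (at y)"
    using ne by (auto intro!: derivative_eq_intros simp: power2_eq_square)
  moreover have "(1*(1-y^2) - y*(-(2*y)))/((1-y^2)*(1-y^2)) = (1+y^2)/(1-y^2)^2"
    by (simp add: power2_eq_square algebra_simps)
  ultimately show ?thesis by simp
qed

lemma sq_lt1: fixes y :: real assumes "-1 < y" "y < 1" shows "y^2 < 1"
  using assms by (simp add: abs_square_less_1 abs_less_iff)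

lemma omega_nonneg: fixes x :: real assumes "0 \<le> x" "x < 1"
  shows "(ln (1+x) - ln (1-x))/2 \<le> x/(1-x^2)"
proof -
  let ?w = "\<lambda>x. x/(1-x^2) - (ln (1+x) - ln (1-x))/2"
  have "?w 0 \<le> ?w x"
  proof (rule DERIV_nonneg_imp_nondecreasing[OF assms(1)])
    fix y assume y: "0 \<le> y" "y \<le> x"
    then have y1: "-1 < y" "y < 1" using assms by auto
    have h: "y^2 < 1" using sq_lt1[OF y1] .
    have "(?w has_real_derivative ((1+y^2)/(1-y^2)^2 - 1/(1-y^2))) (at y)"
      by (rule DERIV_diff[OF Qd[OF y1] Ld[OF y1]])
    moreover have "(1+y^2)/(1-y^2)^2 - 1/(1-y^2) \<ge> 0"
    proof -
      have "1/(1-y^2) = (1-y^2)/(1-y^2)^2" using h by (simp add: power2_eq_square)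
      also have "\<dots> \<le> (1+y^2)/(1-y^2)^2" using h
        by (intro divide_right_mono) auto
      finally show ?thesis by simp
    qed
    ultimately show "\<exists>d. (?w has_real_derivative d) (at y) \<and> 0 \<le> d" by blast
  qed
  then show ?thesis by simp
qed

lemma chi_nonneg: fixes x :: real assumes "0 \<le> x" "x < 1"
  shows "2 * GG x \<le> x * ((ln (1+x) - ln (1-x))/2)"
proof -
  let ?w = "\<lambda>x. x * ((ln (1+x) - ln (1-x))/2) - 2 * GG x"
  have "?w 0 \<le> ?w x"
  proof (rule DERIV_nonneg_imp_nondecreasing[OF assms(1)])
    fix y assume y: "0 \<le> y" "y \<le> x"
    then have y1: "-1 < y" "y < 1" using assms by auto
    have "(?w has_real_derivative (y * (1/(1-y^2)) + 1 * ((ln (1+y) - ln (1-y))/2) - 2 * ((ln (1+y) - ln (1-y))/2))) (at y)"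
      by (rule DERIV_diff[OF DERIV_mult'[OF DERIV_ident Ld[OF y1]] DERIV_cmult[OF GG_deriv[OF y1]]])
    moreover have "(y * (1/(1-y^2)) + 1 * ((ln (1+y) - ln (1-y))/2) - 2 * ((ln (1+y) - ln (1-y))/2)) \<ge> 0"
    proof -
      have "y * (1/(1-y^2)) = y/(1-y^2)" by simp
      then show ?thesis using omega_nonneg[of y] y1 y by linarith
    qed
    ultimately show "\<exists>d. (?w has_real_derivative d) (at y) \<and> 0 \<le> d" by blast
  qed
  then show ?thesis by (simp add: GG_def)
qed

lemma GG_nonneg: fixes t :: real assumes "0 \<le> t" "t \<le> 1" shows "0 \<le> GG t"
proof -
  have "GG 0 \<le> GG t"
  proof (rule DERIV_nonneg_imp_increasing_open[OF assms(1)])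
    fix x assume x: "0 < x" "x < t"
    then have x1: "-1 < x" "x < 1" using assms by auto
    have "ln (1-x) \<le> ln (1+x)" using x x1 by simp
    then show "\<exists>y. (GG has_real_derivative y) (at x) \<and> 0 \<le> y"
      using GG_deriv[OF x1] by auto
  next
    show "continuous_on {0..t} GG" using GG_cont assms continuous_on_subset by fastforce
  qed
  then show ?thesis by (simp add: GG_def)
qed

lemma psi_mono: fixes a b :: real assumes "0 < a" "a \<le> b" "b \<le> 1"
  shows "GG a / a^2 \<le> GG b / b^2"
proof (rule DERIV_nonneg_imp_increasing_open[OF assms(2)])
  fix x assume x: "a < x" "x < b"
  then have x1: "-1 < x" "x < 1" and xp: "0 < x" using assms by auto
  have "((\<lambda>x. GG x / x^2) has_real_derivative
     (((ln (1+x) - ln (1-x))/2) * x^2 - GG x * (2 * x)) / (x^2 * x^2)) (at x)"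
    using xp by (auto intro!: derivative_eq_intros GG_deriv[OF x1] simp: power2_eq_square)
  moreover have "(((ln (1+x) - ln (1-x))/2) * x^2 - GG x * (2 * x)) / (x^2 * x^2) \<ge> 0"
  proof -
    have "((ln (1+x) - ln (1-x))/2) * x^2 - GG x * (2 * x) = x * (x * ((ln (1+x) - ln (1-x))/2) - 2 * GG x)"
      by (simp add: algebra_simps power2_eq_square)
    also have "\<dots> \<ge> 0" using chi_nonneg[of x] x1 xp by simp
    finally show ?thesis by simp
  qed
  ultimately show "\<exists>y. ((\<lambda>x. GG x / x^2) has_real_derivative y) (at x) \<and> 0 \<le> y" by blast
next
  show "continuous_on {a..b} (\<lambda>x. GG x / x^2)"
  proof -
    have c: "continuous_on {a..b} GG" using GG_cont assms continuous_on_subset by fastforce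
    show ?thesis using c assms by (auto intro!: continuous_intros)
  qed
qed

lemma GG_main: fixes s t k :: real
  assumes "0 \<le> s" "s \<le> t" "t \<le> 1" "s^2 \<le> k * t^2" "0 \<le> k"
  shows "GG s \<le> k * GG t"
proof (cases "s = 0")
  case True
  then show ?thesis using GG_nonneg[of t] assms by (simp add: GG_def)
next
  case False
  then have sp: "0 < s" using assms by simp
  have tp: "0 < t" using sp assms by simp
  have ps: "GG s / s^2 \<le> GG t / t^2" using psi_mono sp assms by blast
  have pn: "0 \<le> GG t / t^2" using GG_nonneg[of t] assms tp by simp
  have "GG s = s^2 * (GG s / s^2)" using sp by simp
  also have "\<dots> \<le> s^2 * (GG t / t^2)" by (rule mult_left_mono[OF ps]) simp
  also have "\<dots> \<le> (k * t^2) * (GG t / t^2)" using assms(4) pn by (rule mult_right_mono)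
  also have "\<dots> = k * GG t" using tp by simp
  finally show ?thesis .
qed
lemma nsq: "(complex_of_real (cmod z))^2 = z * cnj z"
  by (simp only: of_real_power[symmetric] complex_norm_square)

lemma ent2: fixes x t :: real
  assumes M: "M \<in> carrier_mat 2 2" and e: "M$$(0,0) = of_real x" "M$$(1,1) = of_real (1-x)"
    "M$$(1,0) = cnj (M$$(0,1))" and t: "t = sqrt((2*x-1)^2 + 4*(cmod (M$$(0,1)))^2)" and t1: "t \<le> 1"
  shows "vn_entropy M = ln 2 - GG t"
proof -
  let ?m = "M$$(0,1)"
  have t0: "0 \<le> t" using t by simp
  have tsq: "t^2 = (2*x-1)^2 + 4*(cmod ?m)^2" using t by simp
  have mm: "?m * cnj ?m = of_real ((cmod ?m)^2)" by (rule complex_norm_square[symmetric])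
  have mm2: "(complex_of_real (cmod ?m))^2 = ?m * cnj ?m" by (rule nsq)
  have r: "x*(1-x) - (cmod ?m)^2 = ((1+t)/2) * ((1-t)/2)" using tsq by (simp add: algebra_simps power2_eq_square)
  have "char_poly M = [:-(of_real ((1+t)/2)),1:]*[:-(of_real((1-t)/2)),1:]"
  proof -
    have "char_poly M = [:of_real (x*(1-x) - (cmod ?m)^2), -1, 1:]"
      unfolding char_poly2[OF M] e mm by simp
    also have "\<dots> = [:-(of_real ((1+t)/2)),1:]*[:-(of_real((1-t)/2)),1:]"
      unfolding r apply (simp add: algebra_simps) by (simp add: add_divide_distrib[symmetric])
    finally show ?thesis .
  qed
  from entropy_roots[OF this]
  have v: "vn_entropy M = - ((1+t)/2 * ln ((1+t)/2) + (1-t)/2 * ln ((1-t)/2))" by simp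
  show ?thesis
  proof (cases "t = 1")
    case True then show ?thesis using v by (simp add: GG_def)
  next
    case False
    then have "t < 1" using t1 by simp
    then have l: "ln ((1+t)/2) = ln (1+t) - ln 2" "ln ((1-t)/2) = ln (1-t) - ln 2"
      using t0 by (simp_all add: ln_div)
    show ?thesis using v unfolding l GG_def by (simp add: field_simps)
  qed
qed

lemma adj_entry: assumes "A \<in> carrier_mat n n" "i < n" "j < n"
  shows "mat_adjoint A $$ (i,j) = conjugate (A $$ (j,i))"
  using assms by (simp add: mat_adjoint_def mat_of_rows_def cols_def)

lemma cm: "cmod z * cmod z = Re z * Re z + Im z * Im z"
  using cmod_power2[of z] by (simp add: power2_eq_square)

lemma dens: assumes "density_matrix \<rho>"
  obtains x where "\<rho> \<in> carrier_mat 2 2" "\<rho>$$(0,0) = of_real x" "\<rho>$$(1,1) = of_real (1-x)"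
    "\<rho>$$(1,0) = cnj (\<rho>$$(0,1))" "0 \<le> x" "x \<le> 1" "(cmod (\<rho>$$(0,1)))^2 \<le> x*(1-x)"
proof -
  have C: "\<rho> \<in> carrier_mat 2 2" and H: "mat_adjoint \<rho> = \<rho>"
    and P: "\<And>v. v \<in> carrier_vec 2 \<Longrightarrow> 0 \<le> Re (conjugate v \<bullet> (\<rho> *\<^sub>v v))"
    and T: "mtrace \<rho> = 1" using assms unfolding density_matrix_def by auto
  let ?g = "\<rho>$$(0,1)"
  define x where "x = Re (\<rho>$$(0,0))"
  have h: "\<rho>$$(i,j) = cnj (\<rho>$$(j,i))" if "i < 2" "j < 2" for i j
    using adj_entry[OF C that] H by simp
  have e0: "\<rho>$$(0,0) = of_real x" using h[of 0 0] unfolding x_def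
    by (metis Reals_cnj_iff of_real_Re zero_less_numeral)
  have tr: "\<rho>$$(0,0) + \<rho>$$(1,1) = 1" using T C unfolding mtrace_def
    by (simp add: numeral_2_eq_2)
  have e1: "\<rho>$$(1,1) = of_real (1-x)" using tr e0 by (simp add: algebra_simps)
  have e2: "\<rho>$$(1,0) = cnj ?g" using h[of 1 0] by simp
  have mm: "?g * cnj ?g = of_real ((cmod ?g)^2)" by (rule complex_norm_square[symmetric])
  have mm': "cnj ?g * ?g = of_real ((cmod ?g)^2)" by (simp only: mult.commute[of "cnj ?g"] complex_norm_square)
  have q: "0 \<le> Re (cnj (f 0) * (\<rho>$$(0,0) * f 0 + \<rho>$$(0,1) * f 1) + cnj (f 1) * (\<rho>$$(1,0) * f 0 + \<rho>$$(1,1) * f 1))" for f :: "nat \<Rightarrow> complex"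
    using P[of "vec 2 f"] qf2[OF C, of f] by simp
  have x0: "0 \<le> x" using q[of "\<lambda>i. if i = 0 then 1 else 0"] e0 by simp
  have x1: "0 \<le> 1 - x" using q[of "\<lambda>i. if i = 0 then 0 else 1"] e1 by simp
  have d1: "0 \<le> x * (x*(1-x) - (cmod ?g)^2)"
    using q[of "\<lambda>i. if i = 0 then ?g else - of_real x"] unfolding e0 e1 e2
    by (simp add: algebra_simps mm mm' power2_eq_square cm)
  have d2: "0 \<le> (1-x) * (x*(1-x) - (cmod ?g)^2)"
    using q[of "\<lambda>i. if i = 0 then - of_real (1-x) else cnj ?g"] unfolding e0 e1 e2
    by (simp add: algebra_simps mm mm' power2_eq_square cm)
  have "0 \<le> x*(1-x) - (cmod ?g)^2"
  proof -
    have "0 \<le> x * (x*(1-x) - (cmod ?g)^2) + (1-x) * (x*(1-x) - (cmod ?g)^2)" using d1 d2 by simp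
    also have "\<dots> = x*(1-x) - (cmod ?g)^2" by (simp add: algebra_simps)
    finally show ?thesis .
  qed
  then show ?thesis using that C e0 e1 e2 x0 x1 by simp
qed
theorem mainTheorem18:
  fixes p1 p2 p3 :: real and \<rho> :: "complex mat"
  assumes "0 \<le> p1" "0 \<le> p2" "0 \<le> p3" "0 \<le> 1 - p1 - p2 - p3"
    and "density_matrix \<rho>"
  defines "p \<equiv> 2 * min (p1 * p2 + p1 * p3) (min (p2 * p1 + p2 * p3) (p3 * p1 + p3 * p2))"
  shows "vn_entropy (pauli_channel p1 p2 p3 \<rho>) - vn_entropy \<rho> \<ge> p * (ln 2 - vn_entropy \<rho>)"
proof -
  obtain x where C: "\<rho> \<in> carrier_mat 2 2" and e: "\<rho>$$(0,0) = of_real x" "\<rho>$$(1,1) = of_real (1-x)"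
    "\<rho>$$(1,0) = cnj (\<rho>$$(0,1))" and x: "0 \<le> x" "x \<le> 1" and g: "(cmod (\<rho>$$(0,1)))^2 \<le> x*(1-x)"
    using dens[OF assms(5)] by blast
  define a where "a = Re (\<rho>$$(0,1))"
  define b where "b = Im (\<rho>$$(0,1))"
  have cg: "(cmod (\<rho>$$(0,1)))^2 = a^2 + b^2" unfolding a_def b_def by (simp add: cmod_power2)
  define t where "t = sqrt((2*x-1)^2 + 4*(cmod (\<rho>$$(0,1)))^2)"
  define q where "q = 1 - p1 - p2 - p3"
  define l1 where "l1 = 1 - 2*(p2+p3)"
  define l2 where "l2 = 1 - 2*(p1+p3)"
  define l3 where "l3 = 1 - 2*(p1+p2)"
  define k where "k = 1 - p"
  have tsq: "t^2 = (2*x-1)^2 + 4*a^2 + 4*b^2" unfolding t_def cg by simp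
  have t1: "t \<le> 1"
  proof -
    have "(2*x-1)^2 + 4*(cmod (\<rho>$$(0,1)))^2 \<le> 1" using g by (simp add: algebra_simps power2_eq_square)
    then show ?thesis unfolding t_def by simp
  qed
  have t0: "0 \<le> t" unfolding t_def by simp
  have S1: "vn_entropy \<rho> = ln 2 - GG t" by (rule ent2[OF C e t_def t1])
  let ?N = "pauli_channel p1 p2 p3 \<rho>"
  define x' where "x' = (p1+p2)*(1-x) + (1-p1-p2)*x"
  have NC: "?N \<in> carrier_mat 2 2" using pc[OF C] by blast
  have n0: "?N $$ (0,0) = of_real x'" using pc(2)[OF C, of p1 p2 p3] unfolding e x'_def by simp
  have n1: "?N $$ (1,1) = of_real (1-x')" using pc(3)[OF C, of p1 p2 p3] unfolding e x'_def
    by (simp add: algebra_simps)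
  have n01: "?N $$ (0,1) = Complex (l1*a) (l2*b)"
    using pc(4)[OF C, of p1 p2 p3] unfolding e l1_def l2_def a_def b_def
    by (simp add: complex_eq_iff algebra_simps)
  have n10: "?N $$ (1,0) = cnj (?N $$ (0,1))"
    using pc(4,5)[OF C, of p1 p2 p3] unfolding e by simp
  define s where "s = sqrt((2*x'-1)^2 + 4*(cmod (?N$$(0,1)))^2)"
  have ssq: "s^2 = l3^2*(2*x-1)^2 + l1^2*(4*a^2) + l2^2*(4*b^2)"
  proof -
    have "s^2 = (2*x'-1)^2 + 4*(cmod (?N$$(0,1)))^2" unfolding s_def
      by (rule real_sqrt_pow2) simp
    also have "\<dots> = l3^2*(2*x-1)^2 + l1^2*(4*a^2) + l2^2*(4*b^2)"
      unfolding n01 x'_def l3_def cmod_power2 by (simp add: algebra_simps power2_eq_square)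
    finally show ?thesis .
  qed
  have pA: "p \<le> 2*(p1*(p2+p3))" "p \<le> 2*(p2*(p1+p3))" "p \<le> 2*(p3*(p1+p2))"
  proof -
    have "p \<le> 2*(p1 * p2 + p1 * p3)" "p \<le> 2*(p2 * p1 + p2 * p3)" "p \<le> 2*(p3 * p1 + p3 * p2)"
    proof -
      have gm: "2*min A (min B C) \<le> 2*A" "2*min A (min B C) \<le> 2*B" "2*min A (min B C) \<le> 2*C" for A B C :: real
        by auto
      show "p \<le> 2*(p1 * p2 + p1 * p3)" "p \<le> 2*(p2 * p1 + p2 * p3)" "p \<le> 2*(p3 * p1 + p3 * p2)"
        unfolding p_def by (rule gm(1), rule gm(2), rule gm(3))
    qed
    then show "p \<le> 2*(p1*(p2+p3))" "p \<le> 2*(p2*(p1+p3))" "p \<le> 2*(p3*(p1+p2))"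
      by (simp_all add: distrib_left)
  qed
  have qn: "0 \<le> q" using assms(4) q_def by simp
  have L1: "l1^2 = 1 - 2*(p1*(p2+p3)) - (p2+p3)*(4*q+2*p1)" unfolding l1_def q_def by (simp add: algebra_simps power2_eq_square)
  have L2: "l2^2 = 1 - 2*(p2*(p1+p3)) - (p1+p3)*(4*q+2*p2)" unfolding l2_def q_def by (simp add: algebra_simps power2_eq_square)
  have L3: "l3^2 = 1 - 2*(p3*(p1+p2)) - (p1+p2)*(4*q+2*p3)" unfolding l3_def q_def by (simp add: algebra_simps power2_eq_square)
  have P1: "0 \<le> (p2+p3)*(4*q+2*p1)" "0 \<le> (p1+p3)*(4*q+2*p2)" "0 \<le> (p1+p2)*(4*q+2*p3)"
    using assms(1-3) qn by simp_all
  have k1: "l1^2 \<le> k" "l2^2 \<le> k" "l3^2 \<le> k" unfolding k_def using L1 L2 L3 P1 pA by linarith+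
  have k0: "0 \<le> k" using k1(1) by (smt (verit) zero_le_power2)
  have s_k: "s^2 \<le> k * t^2"
  proof -
    have "l3^2*(2*x-1)^2 \<le> k*(2*x-1)^2" "l1^2*(4*a^2) \<le> k*(4*a^2)" "l2^2*(4*b^2) \<le> k*(4*b^2)"
      using k1 by (simp_all add: mult_right_mono)
    then show ?thesis unfolding ssq tsq by (simp add: algebra_simps)
  qed
  have kk: "k \<le> 1" unfolding k_def p_def using assms(1-3) by simp
  have s_t: "s \<le> t"
  proof -
    have "s^2 \<le> t^2" using s_k kk t0
      by (smt (verit) mult_right_mono zero_le_power2 mult_left_le_one_le)
    then show ?thesis using t0 by (rule power2_le_imp_le)
  qed
  have s0: "0 \<le> s" unfolding s_def by simp
  have S2: "vn_entropy ?N = ln 2 - GG s"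
    by (rule ent2[OF NC n0 n1 n10 s_def]) (use s_t t1 in simp)
  have "GG s \<le> k * GG t" by (rule GG_main[OF s0 s_t t1 s_k k0])
  then show ?thesis unfolding S1 S2 k_def by (simp add: algebra_simps)
qed
end
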